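(* For each $c>0$ let $\alpha_c,\beta_c,\gamma:\mathbb{R}^n\times\mathbb{S}^m\to\mathbb{R}$ satisfy: (a) $\alpha_c,\beta_c,\gamma$ are continuously differentiable for all $c>0$; (b) $\alpha_c(x,\Lambda)>0$ for all $x$ feasible for (NSDP), all $\Lambda\in\mathbb{S}^m$ and all $c>0$; and, for every KKT pair $(\bar x,\bar\Lambda)$ of (NSDP): (c) $\alpha_c(\bar x,\bar\Lambda)\beta_c(\bar x,\bar\Lambda)=1$ for all $c>0$; (d) $\gamma(\bar x,\bar\Lambda)=0$, $\nabla_x\gamma(\bar x,\bar\Lambda)=0$ and $\nabla_\Lambda\gamma(\bar x,\bar\Lambda)=0$; (e) there exist neighborhoods $V_{\bar x}$ of $\bar x$ and $V_{\bar\Lambda}$ of $\bar\Lambda$ and a continuous function $\Gamma:V_{\bar x}\to V_{\bar\Lambda}$ with $\Gamma(\bar x)=\bar\Lambda$ and $\gamma(x,\Gamma(x))=0$ for all $x\in V_{\bar x}$. Define $$\mathcal{A}_c(x,\Lambda):=f(x)+\alpha_c(x,\Lambda)\,\varphi\big(G(x),\beta_c(x,\Lambda)\Lambda\big)+\gamma(x,\Lambda),\qquad \varphi(Y,Z)=\Big\|P\Big(\tfrac Z2-Y\Big)\Big\|_F^2-\tfrac{\|Z\|_F^2}{4}.$$ If $(x,\Lambda)\in\mathbb{R}^n\times\mathbb{S}^m$ is a KKT pair of (NSDP), then for all $c>0$, $(x,\Lambda)$ is a stationary point of $\mathcal{A}_c$ (i.e. $\nabla_x\mathcal{A}_c(x,\Lambda)=0$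 and $\nabla_\Lambda\mathcal{A}_c(x,\Lambda)=0$) and $\mathcal{A}_c(x,\Lambda)=f(x)$.
   Context: $\mathbb{S}^m$ is the space of real symmetric $m\times m$ matrices with inner product $\langle Y,Z\rangle=\operatorname{tr}(YZ)$ and Frobenius norm $\|\cdot\|_F$; $\mathbb{S}^m_+$ is the positive semidefinite cone and $P$ the orthogonal projection onto $\mathbb{S}^m_+$. $f:\mathbb{R}^n\to\mathbb{R}$ and $G:\mathbb{R}^n\to\mathbb{S}^m$ are twice continuously differentiable; (NSDP) is: minimize $f(x)$ subject to $G(x)\in\mathbb{S}^m_+$. For $x\in\mathbb{R}^n$, $\nabla G(x)v=\sum_i v_i\,\partial G(x)/\partial x_i$ and its adjoint is $\nabla G(x)^*Z=(\langle \partial G(x)/\partial x_i,Z\rangle)_{i=1}^n$. The Lagrangian is $L(x,\Lambda)=f(x)-\langle G(x),\Lambda\rangle$, so $\nabla_xL(x,\Lambda)=\nabla f(x)-\nabla G(x)^*\Lambda$. With the Jordan product $Y\circ Z=(YZ+ZY)/2$, a pair $(x,\Lambda)$ is a KKT pair of (NSDP) if $\nabla_xL(x,\Lambda)=0$, $\Lambda\circ G(x)=0$, $G(x)\in\mathbb{S}^m_+$ and $\Lambda\in\mathbb{S}^m_+$. *)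

theory Defs
  imports "HOL-Analysis.Analysis"
begin

definition sym_mats :: "(real^'m^'m) set" where
  "sym_mats = {A. transpose A = A}"

definition psd_mats :: "(real^'m^'m) set" where
  "psd_mats = {A. transpose A = A \<and> (\<forall>v. 0 \<le> v \<bullet> (A *v v))}"

definition mat_inner :: "real^'m^'m \<Rightarrow> real^'m^'m \<Rightarrow> real" where
  "mat_inner Y Z = trace (Y ** Z)"

text \<open>Frobenius norm: the Euclidean norm on real^'m^'m is sqrt of the sum of squared entries.\<close>
definition frob :: "real^'m^'m \<Rightarrow> real" where
  "frob A = norm A"

definition proj_psd :: "real^'m^'m \<Rightarrow> real^'m^'m" where
  "proj_psd Y = (SOME Z. Z \<in> psd_mats \<and> (\<forall>W\<in>psd_mats. frob (Y - Z) \<le> frob (Y - W)))"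

definition jordan :: "real^'m^'m \<Rightarrow> real^'m^'m \<Rightarrow> real^'m^'m" where
  "jordan Y Z = (1/2) *\<^sub>R (Y ** Z + Z ** Y)"

definition phi :: "real^'m^'m \<Rightarrow> real^'m^'m \<Rightarrow> real" where
  "phi Y Z = (frob (proj_psd ((1/2) *\<^sub>R Z - Y)))^2 - (frob Z)^2 / 4"

definition C2 :: "('a::real_normed_vector \<Rightarrow> 'b::real_normed_vector) \<Rightarrow> bool" where
  "C2 g \<longleftrightarrow> (\<exists>D D2. (\<forall>x. (g has_derivative blinfun_apply (D x)) (at x)) \<and>
                    (\<forall>x. (D has_derivative blinfun_apply (D2 x)) (at x)) \<and>
                    continuous_on UNIV D2)"

definition C1_on :: "'a::real_normed_vector set \<Rightarrow> ('a \<Rightarrow> 'b::real_normed_vector) \<Rightarrow> bool" where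
  "C1_on S g \<longleftrightarrow> (\<exists>D. (\<forall>p\<in>S. (g has_derivative blinfun_apply (D p)) (at p within S)) \<and>
                    continuous_on S D)"

text \<open>KKT pair of (NSDP): grad_x L(x,Lambda) = 0, Lambda o G(x) = 0, G(x), Lambda PSD.
  grad f(x) - grad G(x)^* Lambda = 0 is expressed componentwise along every direction v.\<close>
definition KKT_pair :: "(real^'n \<Rightarrow> real) \<Rightarrow> (real^'n \<Rightarrow> real^'m^'m) \<Rightarrow> real^'n \<Rightarrow> real^'m^'m \<Rightarrow> bool" where
  "KKT_pair f G x \<Lambda> \<longleftrightarrow>
     (\<forall>v. frechet_derivative f (at x) v - mat_inner (frechet_derivative G (at x) v) \<Lambda> = 0) \<and>
     jordan \<Lambda> (G x) = 0 \<and> G x \<in> psd_mats \<and> \<Lambda> \<in> psd_mats"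

text \<open>Both partial gradients (x and Lambda in S^m) of g vanish at p, for g on R^n x S^m.\<close>
definition grads_vanish :: "((real^'n) \<times> (real^'m^'m) \<Rightarrow> real) \<Rightarrow> (real^'n) \<times> (real^'m^'m) \<Rightarrow> bool" where
  "grads_vanish g p \<longleftrightarrow> (\<exists>D. (g has_derivative D) (at p within (UNIV \<times> sym_mats)) \<and>
                          (\<forall>h H. H \<in> sym_mats \<longrightarrow> D (h, H) = 0))"

definition aug_lag ::
  "(real^'n \<Rightarrow> real) \<Rightarrow> (real^'n \<Rightarrow> real^'m^'m) \<Rightarrow> ((real^'n) \<times> (real^'m^'m) \<Rightarrow> real) \<Rightarrow>
   ((real^'n) \<times> (real^'m^'m) \<Rightarrow> real) \<Rightarrow> ((real^'n) \<times> (real^'m^'m) \<Rightarrow> real) \<Rightarrow>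
   (real^'n) \<times> (real^'m^'m) \<Rightarrow> real" where
  "aug_lag f G \<alpha> \<beta> \<gamma> p =
     f (fst p) + \<alpha> p * phi (G (fst p)) (\<beta> p *\<^sub>R snd p) + \<gamma> p"

end

theory Submission
  imports Defs
begin

lemma quad_zero:
  fixes a k :: real
  assumes "\<forall>t. 2*t*a \<le> k*t^2" shows "a = 0"
proof -
  have k: "k \<ge> 0" using assms[rule_format, of 1] assms[rule_format, of "-1"] by auto
  have "2*(a/(k+1))*a \<le> k*(a/(k+1))^2" using assms by blast
  hence "(k+1)^2 * (2*(a/(k+1))*a) \<le> (k+1)^2*(k*(a/(k+1))^2)" by (rule mult_left_mono) simp
  moreover have "(k+1)^2 * (2*(a/(k+1))*a) = 2*a^2*(k+1)" using k by (simp add: power2_eq_square field_simps)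
  moreover have "(k+1)^2*(k*(a/(k+1))^2) = k*a^2"
  proof -
    have "(k+1)^2 \<noteq> 0" using k by simp
    have "(k+1)^2*(k*(a/(k+1))^2) = k*a^2*((k+1)^2/(k+1)^2)" by (simp add: power_divide)
    also have "\<dots> = k*a^2" using \<open>(k+1)^2 \<noteq> 0\<close> by simp
    finally show ?thesis .
  qed
  ultimately have "2*a^2*(k+1) \<le> k*a^2" by simp
  hence "a^2*(k+2) \<le> 0" by (simp add: algebra_simps)
  moreover have "k + 2 > 0" using k by simp
  ultimately have "a^2 \<le> 0" by (simp add: mult_le_0_iff)
  thus ?thesis by simp
qed

lemma spectral_sub:
  fixes f :: "'a::euclidean_space \<Rightarrow> 'a"
  assumes lin: "linear f" and sa: "\<And>x y. inner (f x) y = inner x (f y)"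
  shows "subspace S \<Longrightarrow> f ` S \<subseteq> S \<Longrightarrow> \<exists>U. finite U \<and> U \<subseteq> S \<and> pairwise orthogonal U \<and> 0 \<notin> U \<and>
     (\<forall>u\<in>U. \<exists>l. f u = l *\<^sub>R u) \<and> (\<forall>x\<in>S. x = (\<Sum>u\<in>U. (inner x u / inner u u) *\<^sub>R u))"
proof (induction "dim S" arbitrary: S rule: less_induct)
  case less
  show ?case
  proof (cases "S = {0}")
    case True
    then show ?thesis by (intro exI[of _ "{}"]) auto
  next
    case False
    then obtain v where v: "v \<in> S" "v \<noteq> 0" using less.prems subspace_0 by blast
    define T where "T = S \<inter> sphere 0 1"
    have "(1/norm v) *\<^sub>R v \<in> T" using v less.prems unfolding T_def by (auto simp: subspace_scale)
    hence Tne: "T \<noteq> {}" by auto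
    have Tc: "compact T" unfolding T_def
      by (simp add: closed_subspace less.prems(1) closed_Int_compact compact_sphere)
    have "continuous_on T (\<lambda>x. inner x (f x))"
      using lin by (intro continuous_intros linear_continuous_on linear_conv_bounded_linear[THEN iffD1]) auto
    then obtain u where uT: "u \<in> T" and umax: "\<And>y. y \<in> T \<Longrightarrow> inner y (f y) \<le> inner u (f u)"
      using continuous_attains_sup[OF Tc Tne] by blast
    define l where "l = inner u (f u)"
    have uS: "u \<in> S" and uu: "inner u u = 1" using uT unfolding T_def by (auto simp: dot_square_norm)
    have gen: "inner y (f y) \<le> l * inner y y" if "y \<in> S" for y
    proof (cases "y = 0")
      case True then show ?thesis by (simp add: linear_0[OF lin])
    next
      case False
      have "(1/norm y) *\<^sub>R y \<in> T" using that False less.prems unfolding T_def by (auto simp: subspace_scale)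
      hence "inner ((1/norm y) *\<^sub>R y) (f ((1/norm y) *\<^sub>R y)) \<le> l" using umax l_def by blast
      hence "(1/norm y)^2 * inner y (f y) \<le> l" by (simp add: linear_scale[OF lin] power2_eq_square)
      hence "inner y (f y) \<le> l * (norm y)^2" using False by (simp add: field_simps)
      thus ?thesis by (simp add: dot_square_norm)
    qed
    have orth: "inner w (f u) = 0" if "w \<in> S" "inner w u = 0" for w
    proof -
      have "2*t*inner w (f u) \<le> (l * inner w w - inner w (f w))*t^2" for t
      proof -
        have "u + t *\<^sub>R w \<in> S" using uS that less.prems by (simp add: subspace_add subspace_scale)
        hence "inner (u + t *\<^sub>R w) (f (u + t *\<^sub>R w)) \<le> l * inner (u + t *\<^sub>R w) (u + t *\<^sub>R w)" by (rule gen)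
        moreover have "inner u (f w) = inner w (f u)" using sa by (metis inner_commute)
        moreover have "inner u w = 0" using that by (simp add: inner_commute)
        ultimately show ?thesis using uu that
          by (simp add: linear_add[OF lin] linear_scale[OF lin] inner_add_left inner_add_right
              l_def power2_eq_square algebra_simps inner_commute)
      qed
      thus ?thesis using quad_zero by blast
    qed
    have eig: "f u = l *\<^sub>R u"
    proof -
      define w where "w = f u - l *\<^sub>R u"
      have wS: "w \<in> S" unfolding w_def using uS less.prems by (auto simp: subspace_diff subspace_scale)
      have wu: "inner w u = 0" unfolding w_def using uu by (simp add: inner_diff_left l_def inner_commute[of "f u" u])
      have "inner w w = inner w (f u) - l * inner w u" unfolding w_def by (simp add: inner_diff_right)
      hence "inner w w = 0" using orth[OF wS wu] wu by simp
      thus ?thesis unfolding w_def by simp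
    qed
    define S' where "S' = S \<inter> {x. inner x u = 0}"
    have sub': "subspace S'" unfolding S'_def
      by (intro subspace_inter less.prems(1)) (auto simp: subspace_def inner_add_left)
    have inv': "f ` S' \<subseteq> S'"
    proof
      fix y assume "y \<in> f ` S'"
      then obtain x where x: "x \<in> S'" "y = f x" by blast
      have "inner (f x) u = inner x (f u)" by (rule sa)
      also have "\<dots> = 0" using x eig unfolding S'_def by simp
      finally show "y \<in> S'" using x less.prems unfolding S'_def by auto
    qed
    have "dim S' < dim S"
    proof (rule dim_psubset)
      show "span S' \<subset> span S"
      proof -
        have "span S' = S'" "span S = S" using sub' less.prems(1) by (auto simp: span_eq_iff)
        moreover have "S' \<subset> S"
        proof -
          have "u \<notin> S'" using uu unfolding S'_def by auto
          thus ?thesis using uS unfolding S'_def by blast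
        qed
        ultimately show ?thesis using sub' less.prems(1) by (metis span_eq_iff)
      qed
    qed
    from less.hyps[OF this sub' inv'] obtain U where U: "finite U" "U \<subseteq> S'" "pairwise orthogonal U" "0 \<notin> U"
      "\<forall>u\<in>U. \<exists>l. f u = l *\<^sub>R u" "\<forall>x\<in>S'. x = (\<Sum>u\<in>U. (inner x u / inner u u) *\<^sub>R u)" by blast
    have uU: "u \<notin> U" using U(2) uu unfolding S'_def by auto
    show ?thesis
    proof (intro exI[of _ "insert u U"] conjI ballI)
      show "finite (insert u U)" using U by simp
      show "insert u U \<subseteq> S" using U uS unfolding S'_def by auto
      show "pairwise orthogonal (insert u U)" using U(2,3) unfolding S'_def
        by (auto simp: pairwise_insert orthogonal_def inner_commute)
      show "0 \<notin> insert u U" using U uu by auto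
      show "\<exists>l. f v = l *\<^sub>R v" if "v \<in> insert u U" for v using that U eig by auto
      fix x assume xS: "x \<in> S"
      define x' where "x' = x - inner x u *\<^sub>R u"
      have "x' \<in> S'" unfolding S'_def x'_def using xS uS less.prems uu
        by (auto simp: subspace_diff subspace_scale inner_diff_left)
      hence "x' = (\<Sum>v\<in>U. (inner x' v / inner v v) *\<^sub>R v)" using U by blast
      also have "\<dots> = (\<Sum>v\<in>U. (inner x v / inner v v) *\<^sub>R v)"
      proof (rule sum.cong)
        fix v assume "v \<in> U"
        hence "inner u v = 0" using U(2) unfolding S'_def by (auto simp: inner_commute)
        thus "(inner x' v / inner v v) *\<^sub>R v = (inner x v / inner v v) *\<^sub>R v"
          unfolding x'_def by (simp add: inner_diff_left)
      qed simp
      finally show "x = (\<Sum>v\<in>insert u U. (inner x v / inner v v) *\<^sub>R v)"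
        using U(1) uU uu unfolding x'_def by (simp add: algebra_simps)
    qed
  qed
qed

lemma sym_mv: fixes B :: "real^'m^'m" assumes "transpose B = B"
  shows "inner (B *v x) y = inner x (B *v y)"
  by (metis assms dot_lmul_matrix inner_commute transpose_transpose vector_transpose_matrix)

lemma psd_dual:
  fixes B C :: "real^'m^'m"
  assumes C: "C \<in> psd_mats" and B: "B \<in> psd_mats"
  shows "inner C B \<ge> 0"
proof -
  have Bt: "transpose B = B" using B by (simp add: psd_mats_def)
  have lin: "linear ((*v) B)" by (simp add: matrix_vector_mul_linear)
  obtain U where U: "finite U" "pairwise orthogonal U" "0 \<notin> U"
      "\<forall>u\<in>U. \<exists>l. B *v u = l *\<^sub>R u" "\<forall>x::real^'m. x = (\<Sum>u\<in>U. (inner x u / inner u u) *\<^sub>R u)"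
    using spectral_sub[OF lin sym_mv[OF Bt], of UNIV] by auto
  define l where "l u = inner u (B *v u) / inner u u" for u
  have eig: "B *v u = l u *\<^sub>R u" if "u \<in> U" for u
  proof -
    from U(4) that obtain l' where l': "B *v u = l' *\<^sub>R u" by (elim ballE exE) auto
    have "u \<noteq> 0" using U(3) that by metis
    then have "inner u u \<noteq> 0" by simp
    then have "l u = l'" unfolding l_def l' by (simp add: inner_scaleR_right)
    thus ?thesis using l' by simp
  qed
  have lnn: "l u \<ge> 0" if "u \<in> U" for u
    using B unfolding l_def psd_mats_def by (auto intro!: divide_nonneg_nonneg)
  have Bij: "B$i$j = (\<Sum>u\<in>U. (u$j / inner u u) * l u * u$i)" for i j
  proof -
    have "B *v axis j 1 = B *v (\<Sum>u\<in>U. (inner (axis j 1) u / inner u u) *\<^sub>R u)"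
      using arg_cong[of _ _ "(*v) B", OF U(5)[rule_format, of "axis j 1"]] .
    also have "\<dots> = (\<Sum>u\<in>U. (inner (axis j 1) u / inner u u) *\<^sub>R (B *v u))"
      by (simp add: linear_sum[OF lin] linear_scale[OF lin] o_def)
    also have "\<dots> = (\<Sum>u\<in>U. (u$j / inner u u) *\<^sub>R (l u *\<^sub>R u))"
      by (rule sum.cong) (auto simp: eig inner_axis')
    finally have "(B *v axis j 1) $ i = (\<Sum>u\<in>U. (u$j / inner u u) * l u * u$i)"
      by (simp add: sum_component)
    moreover have "(B *v axis j 1) $ i = B$i$j"
      by (simp add: matrix_vector_mult_def axis_def if_distrib cong: if_cong)
    ultimately show ?thesis by simp
  qed
  have "inner C B = (\<Sum>i\<in>UNIV. \<Sum>j\<in>UNIV. C$i$j * B$i$j)"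
    by (simp add: inner_vec_def)
  also have "\<dots> = (\<Sum>i\<in>UNIV. \<Sum>j\<in>UNIV. \<Sum>u\<in>U. C$i$j * ((u$j / inner u u) * l u * u$i))"
    by (simp add: Bij sum_distrib_left)
  also have "\<dots> = (\<Sum>i\<in>UNIV. \<Sum>u\<in>U. \<Sum>j\<in>UNIV. C$i$j * ((u$j / inner u u) * l u * u$i))"
    by (rule sum.cong[OF refl], rule sum.swap)
  also have "\<dots> = (\<Sum>u\<in>U. \<Sum>i\<in>UNIV. \<Sum>j\<in>UNIV. C$i$j * ((u$j / inner u u) * l u * u$i))"
    by (rule sum.swap)
  also have "\<dots> = (\<Sum>u\<in>U. (l u / inner u u) * (\<Sum>i\<in>UNIV. \<Sum>j\<in>UNIV. u$i * C$i$j * u$j))"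
    by (simp add: sum_distrib_left algebra_simps)
  also have "\<dots> \<ge> 0"
  proof (rule sum_nonneg)
    fix u assume u: "u \<in> U"
    have "(\<Sum>i\<in>UNIV. \<Sum>j\<in>UNIV. u$i * C$i$j * u$j) = inner u (C *v u)"
      by (simp add: inner_vec_def matrix_vector_mult_def sum_distrib_left algebra_simps)
    also have "\<dots> \<ge> 0" using C by (simp add: psd_mats_def)
    finally show "0 \<le> l u / inner u u * (\<Sum>i\<in>UNIV. \<Sum>j\<in>UNIV. u$i * C$i$j * u$j)"
      using lnn[OF u] by simp
  qed
  finally show ?thesis .
qed

lemma err_bound:
  fixes A B Q W :: "'a::real_inner"
  assumes AB: "inner A B = 0" and o: "inner (W - Q) Q = 0" and v: "inner (W - Q) (A - Q) \<le> 0"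
    and QB: "inner Q B \<ge> 0" and lip: "norm (Q - A) \<le> norm (W - (A - B))"
  shows "\<bar>inner Q Q - inner A A - inner (2 *\<^sub>R A) (W - (A - B))\<bar> \<le> 3 * (norm (W - (A - B)))^2"
proof -
  define d where "d = W - (A - B)"
  have W: "W = A - B + d" unfolding d_def by simp
  define X where "X = inner A (Q - W)"
  have E: "inner Q Q - inner A A - inner (2 *\<^sub>R A) d = (norm (Q - A))^2 + 2 * X"
    unfolding X_def W power2_norm_eq_inner using AB
    by (simp add: inner_diff_left inner_diff_right inner_add_left inner_add_right inner_commute algebra_simps)
  have X0: "X \<ge> 0"
  proof -
    have "inner (W - Q) A \<le> 0" using v o by (simp add: inner_diff_right)
    thus ?thesis unfolding X_def by (simp add: inner_diff_left inner_diff_right inner_commute)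
  qed
  have "X = inner (A - Q) (Q - W)"
    using o unfolding X_def by (simp add: inner_diff_left inner_diff_right inner_commute algebra_simps)
  also have "\<dots> = - ((norm (A - Q))^2) - inner Q B - inner (A - Q) d"
    unfolding W power2_norm_eq_inner using AB
    by (simp add: inner_diff_left inner_diff_right inner_add_left inner_add_right inner_commute algebra_simps)
  also have "\<dots> \<le> - inner (A - Q) d" using QB zero_le_power2[of "norm (A - Q)"] by linarith
  also have "\<dots> \<le> norm (A - Q) * norm d"
    using Cauchy_Schwarz_ineq2[of "A - Q" d] by (simp add: abs_le_iff)
  also have "\<dots> \<le> norm d * norm d"
    using lip unfolding d_def by (simp add: norm_minus_commute mult_right_mono)
  finally have X1: "X \<le> (norm d)^2" by (simp add: power2_eq_square)
  have sq: "(norm (Q - A))^2 \<le> (norm d)^2" using lip unfolding d_def by (simp add: power_mono)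
  have nn: "0 \<le> (norm (Q - A))^2 + 2 * X" using X0 by simp
  have "\<bar>inner Q Q - inner A A - inner (2 *\<^sub>R A) d\<bar> \<le> 3 * (norm d)^2"
    unfolding E abs_of_nonneg[OF nn] using X1 sq by linarith
  thus ?thesis unfolding d_def .
qed

lemma proj_psd_cp: "proj_psd Y = closest_point psd_mats Y"
  unfolding proj_psd_def closest_point_def frob_def dist_norm ..

lemma lin_transpose: "linear (transpose :: real^'m^'m \<Rightarrow> real^'m^'m)"
  by (rule linearI) (simp_all add: transpose_def vec_eq_iff)

lemma lin_quad: "linear (\<lambda>A::real^'m^'m. inner v (A *v v))"
  by (rule linearI) (simp_all add: matrix_vector_mult_add_rdistrib inner_add_right
      scaleR_matrix_vector_assoc[symmetric])

lemma psd_closed: "closed (psd_mats :: (real^'m^'m) set)"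
proof -
  have eq: "psd_mats = {A::real^'m^'m. transpose A = A} \<inter> (\<Inter>v. {A. 0 \<le> inner v (A *v v)})"
    unfolding psd_mats_def by blast
  have c1: "continuous_on UNIV (transpose :: real^'m^'m \<Rightarrow> real^'m^'m)"
    by (rule linear_continuous_on[OF linear_conv_bounded_linear[THEN iffD1, OF lin_transpose]])
  have 1: "closed {A::real^'m^'m. transpose A = A}"
    using closed_Collect_eq[OF c1 continuous_on_id] by simp
  have c2: "continuous_on UNIV (\<lambda>A::real^'m^'m. inner v (A *v v))" for v
    by (rule linear_continuous_on[OF linear_conv_bounded_linear[THEN iffD1, OF lin_quad]])
  have 2: "closed {A::real^'m^'m. 0 \<le> inner v (A *v v)}" for v
    by (rule closed_Collect_le[OF continuous_on_const c2])
  show ?thesis unfolding eq using 1 2 by (intro closed_Int closed_INT) auto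
qed

lemma tr_add: "transpose (A + B) = transpose A + transpose (B::real^'m^'m)"
  by (simp add: transpose_def vec_eq_iff)

lemma psd_scale: "c \<ge> 0 \<Longrightarrow> A \<in> psd_mats \<Longrightarrow> c *\<^sub>R A \<in> psd_mats"
  unfolding psd_mats_def by (auto simp: transpose_scalar scaleR_matrix_vector_assoc[symmetric])

lemma psd_add: "A \<in> psd_mats \<Longrightarrow> B \<in> psd_mats \<Longrightarrow> A + B \<in> psd_mats"
  unfolding psd_mats_def by (auto simp: tr_add matrix_vector_mult_add_rdistrib inner_add_right)

lemma psd_convex: "convex (psd_mats :: (real^'m^'m) set)"
  unfolding convex_def by (auto intro!: psd_add psd_scale)

lemma psd_zero: "0 \<in> psd_mats"
  unfolding psd_mats_def by (auto simp: transpose_def vec_eq_iff)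


abbreviation "PP \<equiv> closest_point (psd_mats :: (real^'m^'m) set)"

lemma psd_ne: "psd_mats \<noteq> {}" using psd_zero by blast

lemma cp_in: "PP W \<in> psd_mats"
  by (rule closest_point_in_set[OF psd_closed psd_ne])

lemma cp_dot: "C \<in> psd_mats \<Longrightarrow> inner (W - PP W) (C - PP W) \<le> 0"
  by (rule closest_point_dot[OF psd_convex psd_closed])

lemma cp_orth: "inner (W - PP W) (PP W) = 0"
proof -
  have "inner (W - PP W) (0 - PP W) \<le> 0" by (rule cp_dot[OF psd_zero])
  moreover have "inner (W - PP W) (2 *\<^sub>R PP W - PP W) \<le> 0" by (rule cp_dot[OF psd_scale[OF _ cp_in]]) simp
  ultimately show ?thesis by (simp add: inner_diff_right algebra_simps)
qed

lemma cp_lip: "norm (PP W - PP W') \<le> norm (W - W')"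
  using closest_point_lipschitz[OF psd_convex psd_closed psd_ne] by (simp add: dist_norm)

lemma cp_at: fixes A B :: "real^'m^'m" assumes A: "A \<in> psd_mats" and B: "B \<in> psd_mats" and AB: "inner A B = 0"
  shows "PP (A - B) = A"
proof -
  have "\<forall>z\<in>psd_mats. dist (A - B) A \<le> dist (A - B) z"
  proof
    fix z :: "real^'m^'m" assume z: "z \<in> psd_mats"
    have zB: "inner z B \<ge> 0" by (rule psd_dual[OF z B])
    have "inner (A - B - z) (A - B - z) = inner (A - z) (A - z) + 2 * inner z B + inner B B"
      using AB by (simp add: inner_diff_left inner_diff_right inner_commute algebra_simps)
    hence "inner (A - B - A) (A - B - A) \<le> inner (A - B - z) (A - B - z)"
      using zB by simp
    thus "dist (A - B) A \<le> dist (A - B) z" by (simp add: dist_norm norm_le)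
  qed
  thus ?thesis by (rule closest_point_unique[OF psd_convex psd_closed A, symmetric])
qed

lemma N_deriv: fixes A B :: "real^'m^'m" assumes A: "A \<in> psd_mats" and B: "B \<in> psd_mats" and AB: "inner A B = 0"
  shows "((\<lambda>W. inner (PP W) (PP W)) has_derivative (\<lambda>d. inner (2 *\<^sub>R A) d)) (at (A - B))"
  unfolding has_derivative_at_alt
proof (intro conjI allI impI)
  show "bounded_linear (inner (2 *\<^sub>R A))" by (rule bounded_linear_inner_right)
  fix e :: real assume e: "e > 0"
  show "\<exists>d>0. \<forall>y. norm (y - (A - B)) < d \<longrightarrow>
      norm (inner (PP y) (PP y) - inner (PP (A - B)) (PP (A - B)) - inner (2 *\<^sub>R A) (y - (A - B)))
        \<le> e * norm (y - (A - B))"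
  proof (intro exI[of _ "e/3"] conjI allI impI)
    show "e/3 > 0" using e by simp
    fix y :: "real^'m^'m" assume y: "norm (y - (A - B)) < e/3"
    have P0: "PP (A - B) = A" by (rule cp_at[OF A B AB])
    have "\<bar>inner (PP y) (PP y) - inner A A - inner (2 *\<^sub>R A) (y - (A - B))\<bar> \<le> 3 * (norm (y - (A - B)))^2"
    proof (rule err_bound[OF AB cp_orth])
      show "inner (y - PP y) (A - PP y) \<le> 0" by (rule cp_dot[OF A])
      show "inner (PP y) B \<ge> 0" by (rule psd_dual[OF cp_in B])
      show "norm (PP y - A) \<le> norm (y - (A - B))" using cp_lip[of y "A - B"] P0 by simp
    qed
    also have "\<dots> \<le> e * norm (y - (A - B))"
    proof -
      have "3 * norm (y - (A - B)) \<le> e" using y by simp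
      hence "3 * norm (y - (A - B)) * norm (y - (A - B)) \<le> e * norm (y - (A - B))"
        by (rule mult_right_mono) simp
      thus ?thesis by (simp add: power2_eq_square)
    qed
    finally show "norm (inner (PP y) (PP y) - inner (PP (A - B)) (PP (A - B)) - inner (2 *\<^sub>R A) (y - (A - B)))
        \<le> e * norm (y - (A - B))" using P0 by simp
  qed
qed


lemma trace_inner: fixes Y Z :: "real^'m^'m" assumes "transpose Z = Z"
  shows "trace (Y ** Z) = inner Y Z"
proof -
  have "trace (Y ** Z) = (\<Sum>i\<in>UNIV. \<Sum>k\<in>UNIV. Y$i$k * Z$k$i)"
    by (simp add: trace_def matrix_matrix_mult_def)
  also have "\<dots> = (\<Sum>i\<in>UNIV. \<Sum>k\<in>UNIV. Y$i$k * Z$i$k)"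
  proof -
    have zs: "Z$k$i = Z$i$k" for i k
    proof -
      have "(transpose Z)$i$k = Z$i$k" using assms by simp
      thus ?thesis by (simp add: transpose_def)
    qed
    show ?thesis by (simp add: zs)
  qed
  also have "\<dots> = inner Y Z" by (simp add: inner_vec_def)
  finally show ?thesis .
qed

theorem proposition3p5:
  fixes f :: "real^'n \<Rightarrow> real"
    and G :: "real^'n \<Rightarrow> real^'m^'m"
    and \<alpha> \<beta> :: "real \<Rightarrow> (real^'n) \<times> (real^'m^'m) \<Rightarrow> real"
    and \<gamma> :: "(real^'n) \<times> (real^'m^'m) \<Rightarrow> real"
    and x :: "real^'n" and \<Lambda> :: "real^'m^'m"
  assumes f_C2: "C2 f"
    and G_C2: "C2 G"
    and G_sym: "\<And>y. G y \<in> sym_mats"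
    and a: "\<And>c. c > 0 \<Longrightarrow> C1_on (UNIV \<times> sym_mats) (\<alpha> c) \<and> C1_on (UNIV \<times> sym_mats) (\<beta> c)"
    and a_gamma: "C1_on (UNIV \<times> sym_mats) \<gamma>"
    and b: "\<And>c y M. c > 0 \<Longrightarrow> G y \<in> psd_mats \<Longrightarrow> M \<in> sym_mats \<Longrightarrow> \<alpha> c (y, M) > 0"
    and c: "\<And>c xb Lb. KKT_pair f G xb Lb \<Longrightarrow> c > 0 \<Longrightarrow> \<alpha> c (xb, Lb) * \<beta> c (xb, Lb) = 1"
    and d: "\<And>xb Lb. KKT_pair f G xb Lb \<Longrightarrow> \<gamma> (xb, Lb) = 0 \<and> grads_vanish \<gamma> (xb, Lb)"
    and e: "\<And>xb Lb. KKT_pair f G xb Lb \<Longrightarrow>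
              \<exists>Vx VL \<Gamma>. open Vx \<and> xb \<in> Vx \<and> openin (top_of_set sym_mats) VL \<and> Lb \<in> VL \<and>
                continuous_on Vx \<Gamma> \<and> \<Gamma> ` Vx \<subseteq> VL \<and> \<Gamma> xb = Lb \<and>
                (\<forall>y\<in>Vx. \<gamma> (y, \<Gamma> y) = 0)"
    and kkt: "KKT_pair f G x \<Lambda>"
  shows "\<forall>c>0. grads_vanish (aug_lag f G (\<alpha> c) (\<beta> c) \<gamma>) (x, \<Lambda>) \<and>
               aug_lag f G (\<alpha> c) (\<beta> c) \<gamma> (x, \<Lambda>) = f x"
proof (intro allI impI)
  fix c :: real assume cpos: "c > 0"
  define S where "S = (UNIV :: (real^'n) set) \<times> (sym_mats :: (real^'m^'m) set)"
  have kk: "\<And>v. frechet_derivative f (at x) v - mat_inner (frechet_derivative G (at x) v) \<Lambda> = 0"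
    "jordan \<Lambda> (G x) = 0" "G x \<in> psd_mats" "\<Lambda> \<in> psd_mats"
    using kkt unfolding KKT_pair_def by auto
  have Lsym: "\<Lambda> \<in> sym_mats" and Lt: "transpose \<Lambda> = \<Lambda>" and Gt: "transpose (G x) = G x"
    using kk(3,4) unfolding psd_mats_def sym_mats_def by auto
  have p0S: "(x, \<Lambda>) \<in> S" unfolding S_def using Lsym by simp
  obtain Df where Df: "\<And>y. (f has_derivative blinfun_apply (Df y)) (at y)"
    using f_C2 unfolding C2_def by blast
  obtain DG where DG: "\<And>y. (G has_derivative blinfun_apply (DG y)) (at y)"
    using G_C2 unfolding C2_def by blast
  obtain Da where Da: "((\<alpha> c) has_derivative blinfun_apply (Da (x, \<Lambda>))) (at (x, \<Lambda>) within S)"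
    using a[OF cpos] p0S unfolding C1_on_def S_def by blast
  obtain Db where Db: "((\<beta> c) has_derivative blinfun_apply (Db (x, \<Lambda>))) (at (x, \<Lambda>) within S)"
    using a[OF cpos] p0S unfolding C1_on_def S_def by blast
  obtain Dg where Dg: "(\<gamma> has_derivative Dg) (at (x, \<Lambda>) within S)"
      and Dg0: "\<And>h H. H \<in> sym_mats \<Longrightarrow> Dg (h, H) = 0" and g0: "\<gamma> (x, \<Lambda>) = 0"
    using d[OF kkt] unfolding grads_vanish_def S_def by blast
  define a0 where "a0 = \<alpha> c (x, \<Lambda>)"
  define b0 where "b0 = \<beta> c (x, \<Lambda>)"
  have a0p: "a0 > 0" unfolding a0_def by (rule b[OF cpos kk(3) Lsym])
  have ab: "a0 * b0 = 1" unfolding a0_def b0_def by (rule c[OF kkt cpos])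
  have "b0 = 1 / a0" using ab a0p by (simp add: field_simps)
  hence b0p: "b0 > 0" using a0p by simp
  define A where "A = (b0/2) *\<^sub>R \<Lambda>"
  have Apsd: "A \<in> psd_mats" unfolding A_def using b0p kk(4) by (intro psd_scale) auto
  have LG: "inner \<Lambda> (G x) = 0"
  proof -
    have "\<Lambda> ** G x + G x ** \<Lambda> = 0" using kk(2) unfolding jordan_def by simp
    hence "trace (\<Lambda> ** G x + G x ** \<Lambda>) = 0" by (simp add: trace_def)
    hence "trace (\<Lambda> ** G x) + trace (G x ** \<Lambda>) = 0" by (simp only: trace_add)
    hence "inner \<Lambda> (G x) + inner (G x) \<Lambda> = 0" by (simp only: trace_inner[OF Lt] trace_inner[OF Gt])
    moreover have "inner (G x) \<Lambda> = inner \<Lambda> (G x)" by (rule inner_commute)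
    ultimately show ?thesis by simp
  qed
  have AB: "inner A (G x) = 0" unfolding A_def using LG by simp
  define W where "W p = (1/2) *\<^sub>R (\<beta> c p *\<^sub>R snd p) - G (fst p)" for p :: "(real^'n) \<times> (real^'m^'m)"
  have W0: "W (x, \<Lambda>) = A - G x" unfolding W_def A_def b0_def by simp
  have F: "aug_lag f G (\<alpha> c) (\<beta> c) \<gamma> = (\<lambda>p. f (fst p) + \<alpha> c p * (inner (PP (W p)) (PP (W p))
      - (1/4) * inner (\<beta> c p *\<^sub>R snd p) (\<beta> c p *\<^sub>R snd p)) + \<gamma> p)"
    unfolding aug_lag_def phi_def frob_def proj_psd_cp power2_norm_eq_inner W_def by (rule ext) simp
  define dA where "dA = blinfun_apply (Da (x, \<Lambda>))"
  define dB where "dB = blinfun_apply (Db (x, \<Lambda>))"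
  define DW where "DW h = (1/2) *\<^sub>R (b0 *\<^sub>R snd h + dB h *\<^sub>R \<Lambda>) - blinfun_apply (DG x) (fst h)" for h
  have hF: "((\<lambda>p. f (fst p)) has_derivative (\<lambda>h. blinfun_apply (Df x) (fst h))) (at (x, \<Lambda>) within S)"
  proof -
    have "(f has_derivative blinfun_apply (Df x)) (at (fst (x, \<Lambda>)))" using Df by simp
    thus ?thesis by (rule has_derivative_compose[OF has_derivative_fst[OF has_derivative_ident]])
  qed
  have hG: "((\<lambda>p. G (fst p)) has_derivative (\<lambda>h. blinfun_apply (DG x) (fst h))) (at (x, \<Lambda>) within S)"
  proof -
    have "(G has_derivative blinfun_apply (DG x)) (at (fst (x, \<Lambda>)))" using DG by simp
    thus ?thesis by (rule has_derivative_compose[OF has_derivative_fst[OF has_derivative_ident]])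
  qed
  have hZ: "((\<lambda>p. \<beta> c p *\<^sub>R snd p) has_derivative (\<lambda>h. b0 *\<^sub>R snd h + dB h *\<^sub>R \<Lambda>)) (at (x, \<Lambda>) within S)"
    using has_derivative_scaleR[OF Db has_derivative_snd[OF has_derivative_ident]]
    unfolding b0_def dB_def by simp
  have hW: "(W has_derivative DW) (at (x, \<Lambda>) within S)"
    unfolding W_def[abs_def] DW_def
    by (intro has_derivative_diff has_derivative_scaleR_right hZ hG)
  have hN: "((\<lambda>p. inner (PP (W p)) (PP (W p))) has_derivative (\<lambda>h. inner (2 *\<^sub>R A) (DW h))) (at (x, \<Lambda>) within S)"
  proof -
    have "((\<lambda>V. inner (PP V) (PP V)) has_derivative (\<lambda>d. inner (2 *\<^sub>R A) d)) (at (W (x, \<Lambda>)))"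
      unfolding W0 by (rule N_deriv[OF Apsd kk(3) AB])
    from has_derivative_compose[OF hW this] show ?thesis .
  qed
  define DM where "DM h = inner (b0 *\<^sub>R snd h + dB h *\<^sub>R \<Lambda>) (b0 *\<^sub>R \<Lambda>) + inner (b0 *\<^sub>R \<Lambda>) (b0 *\<^sub>R snd h + dB h *\<^sub>R \<Lambda>)" for h
  have hM: "((\<lambda>p. inner (\<beta> c p *\<^sub>R snd p) (\<beta> c p *\<^sub>R snd p)) has_derivative DM) (at (x, \<Lambda>) within S)"
    using has_derivative_inner[OF hZ hZ] unfolding DM_def b0_def by (simp add: inner_commute)
  define N0 where "N0 = inner (PP (W (x, \<Lambda>))) (PP (W (x, \<Lambda>))) - (1/4) * inner (b0 *\<^sub>R \<Lambda>) (b0 *\<^sub>R \<Lambda>)"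
  have N00: "N0 = 0"
    unfolding N0_def W0 cp_at[OF Apsd kk(3) AB] unfolding A_def by (simp add: power2_eq_square)
  define D where "D h = blinfun_apply (Df x) (fst h) + (a0 * (inner (2 *\<^sub>R A) (DW h) - (1/4) * DM h) + dA h * N0) + Dg h" for h
  have hAll: "(aug_lag f G (\<alpha> c) (\<beta> c) \<gamma> has_derivative D) (at (x, \<Lambda>) within S)"
  proof -
    have "((\<lambda>p. f (fst p) + \<alpha> c p * (inner (PP (W p)) (PP (W p))
      - (1/4) * inner (\<beta> c p *\<^sub>R snd p) (\<beta> c p *\<^sub>R snd p)) + \<gamma> p) has_derivative
       (\<lambda>h. blinfun_apply (Df x) (fst h) + (\<alpha> c (x, \<Lambda>) * (inner (2 *\<^sub>R A) (DW h) - (1/4) * DM h) +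
          dA h * (inner (PP (W (x, \<Lambda>))) (PP (W (x, \<Lambda>)))
      - (1/4) * inner (\<beta> c (x, \<Lambda>) *\<^sub>R snd (x, \<Lambda>)) (\<beta> c (x, \<Lambda>) *\<^sub>R snd (x, \<Lambda>)))) + Dg h)) (at (x, \<Lambda>) within S)"
      unfolding dA_def
      by (intro has_derivative_add has_derivative_mult has_derivative_diff has_derivative_mult_right hF Da hN hM Dg)
    thus ?thesis unfolding F D_def N0_def a0_def b0_def by simp
  qed
  have Dz: "D (h, H) = 0" if H: "H \<in> sym_mats" for h H
  proof -
    have e1: "inner (2 *\<^sub>R A) (DW (h, H)) - (1/4) * DM (h, H) = - b0 * inner \<Lambda> (blinfun_apply (DG x) h)"
      unfolding A_def DW_def DM_def
      by (simp add: inner_diff_right inner_add_right inner_add_left inner_commute[of H \<Lambda>] algebra_simps)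
    have e2: "blinfun_apply (Df x) h - inner \<Lambda> (blinfun_apply (DG x) h) = 0"
    proof -
      have "frechet_derivative f (at x) = blinfun_apply (Df x)" using frechet_derivative_at[OF Df] by simp
      moreover have "frechet_derivative G (at x) = blinfun_apply (DG x)" using frechet_derivative_at[OF DG] by simp
      ultimately show ?thesis using kk(1)[of h] by (simp add: mat_inner_def trace_inner Lt inner_commute)
    qed
    have "D (h, H) = blinfun_apply (Df x) h - (a0 * b0) * inner \<Lambda> (blinfun_apply (DG x) h)"
      unfolding D_def using e1 N00 Dg0[OF H] by simp
    thus ?thesis using ab e2 by simp
  qed
  show "grads_vanish (aug_lag f G (\<alpha> c) (\<beta> c) \<gamma>) (x, \<Lambda>) \<and> aug_lag f G (\<alpha> c) (\<beta> c) \<gamma> (x, \<Lambda>) = f x"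
  proof
    show "grads_vanish (aug_lag f G (\<alpha> c) (\<beta> c) \<gamma>) (x, \<Lambda>)"
      unfolding grads_vanish_def using hAll Dz unfolding S_def by blast
    have "aug_lag f G (\<alpha> c) (\<beta> c) \<gamma> (x, \<Lambda>) = f x + a0 * N0 + \<gamma> (x, \<Lambda>)"
      unfolding F N0_def a0_def b0_def by simp
    thus "aug_lag f G (\<alpha> c) (\<beta> c) \<gamma> (x, \<Lambda>) = f x" using N00 g0 by simp
  qed
qed

end
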